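(* Consider an extension of the Bounded--Memory Adversary Model in which the Adversary additionally has query access, throughout the entire interaction, to a persistent infinite binary sequence drawn before the interaction, each bit uniform on $\{0,1\}$ and independent of all other randomness. For any streaming algorithm and any $\delta$, if there is an Adversary in this extended model that causes the algorithm to fail (output an incorrect estimate in some round) with probability greater than $\delta$, then there is an Adversary in the (non-extended) Bounded--Memory Adversary Model that causes the algorithm to fail with probability greater than $\delta$.
   Context: Fix $n,m$, a function $f:\mathbb{Z}^n\to\{0\}\cup[1,\alpha]$ with integer $\alpha\ge2$, and $\epsilon>0$. For $x,y\ge0$, $y$ is a $(1+\epsilon)$--multiplicative approximation to $x$ if $x\le y<(1+\epsilon)x$. Updates are pairs $(i_j,\Delta_j)\in[n]\times\{-1,1\}$ accumulating into frequency vectors $v^{(j)}$ with $v^{(j)}_i=\sum_{j'\le j,\,i_{j'}=i}\Delta_{j'}$. Bounded--Memory Adversary Model: a game of $m$ rounds (with $m$ known to both parties) between an Adversary and an Algorithm. The Adversary has a persistent memory of at most $k$ bits (read/write, retained across rounds), a read-only estimate memory containing the most recent estimate $y_{j-1}$ (empty in round 1), an unbounded working memory erased after each round, and fresh random bits each round that are discarded afterwards. In round $j$ the Adversary computes $(i_j,\Delta_j)$ as a function only of the fresh randomness, the persistent memory and the estimate memory (and may rewrite the persistent memory); the Algorithm receives the update and outputs $y_j$, which overwrites the estimate memory. The Algorithm fails if for some $j\in[m]$, $y_j$ is not a $(1+\epsilon)$--multiplicative approximation to $f(v^{(j)})$. *)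

theory Defs
  imports "HOL-Probability.Probability"
begin

definition freq :: "(nat \<times> int) list \<Rightarrow> nat \<Rightarrow> int" where
  "freq ups i = sum_list (map snd (filter (\<lambda>u. fst u = i) ups))"

definition mult_approx :: "real \<Rightarrow> real \<Rightarrow> real \<Rightarrow> bool" where
  "mult_approx \<epsilon> x y \<longleftrightarrow> x \<le> y \<and> y < (1 + \<epsilon>) * x"

definition coins :: "(nat \<Rightarrow> bool) measure" where
  "coins = (\<Pi>\<^sub>M i\<in>UNIV. measure_pmf (bernoulli_pmf (1/2)))"

text \<open>Fresh randomness for each round r is R r (independent across rounds).\<close>

definition round_coins :: "(nat \<Rightarrow> nat \<Rightarrow> bool) measure" where
  "round_coins = (\<Pi>\<^sub>M j\<in>UNIV. coins)"

text \<open>The algorithm has state type 's, initial state s0,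
  its own random coin sequence rho (usable throughout the stream) and a step
  function mapping (rho, state, update) to (new state, estimate).
  The extended adversary consists of an initial persistent memory mem0 and a
  round function act taking the shared persistent random tape tau, the fresh
  random bits of the round, the persistent memory and the estimate memory
  (None = empty) to the update and the new persistent memory.
  The configuration after j rounds is (persistent memory, estimate memory,
  algorithm state, list of updates so far).\<close>

fun run :: "((nat \<Rightarrow> bool) \<Rightarrow> (nat \<Rightarrow> bool) \<Rightarrow> bool list \<Rightarrow> real option
              \<Rightarrow> (nat \<times> int) \<times> bool list) \<Rightarrow> bool list
            \<Rightarrow> ((nat \<Rightarrow> bool) \<Rightarrow> 's \<Rightarrow> nat \<times> int \<Rightarrow> 's \<times> real) \<Rightarrow> 's
            \<Rightarrow> (nat \<Rightarrow> bool) \<Rightarrow> (nat \<Rightarrow> nat \<Rightarrow> bool) \<Rightarrow> (nat \<Rightarrow> bool) \<Rightarrow> nat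
            \<Rightarrow> bool list \<times> real option \<times> 's \<times> (nat \<times> int) list" where
  "run act mem0 astep s0 \<tau> R \<rho> 0 = (mem0, None, s0, [])"
| "run act mem0 astep s0 \<tau> R \<rho> (Suc j) =
     (case run act mem0 astep s0 \<tau> R \<rho> j of (mem, est, s, ups) \<Rightarrow>
       (case act \<tau> (R j) mem est of (u, mem') \<Rightarrow>
         (case astep \<rho> s u of (s', y) \<Rightarrow> (mem', Some y, s', ups @ [u]))))"

definition fails ::
  "((nat \<Rightarrow> int) \<Rightarrow> real) \<Rightarrow> real \<Rightarrow> nat
   \<Rightarrow> ((nat \<Rightarrow> bool) \<Rightarrow> (nat \<Rightarrow> bool) \<Rightarrow> bool list \<Rightarrow> real option
              \<Rightarrow> (nat \<times> int) \<times> bool list) \<Rightarrow> bool list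
   \<Rightarrow> ((nat \<Rightarrow> bool) \<Rightarrow> 's \<Rightarrow> nat \<times> int \<Rightarrow> 's \<times> real) \<Rightarrow> 's
   \<Rightarrow> (nat \<Rightarrow> bool) \<Rightarrow> (nat \<Rightarrow> nat \<Rightarrow> bool) \<Rightarrow> (nat \<Rightarrow> bool) \<Rightarrow> bool" where
  "fails f \<epsilon> m act mem0 astep s0 \<tau> R \<rho> \<longleftrightarrow>
     (\<exists>j\<in>{1..m}. case run act mem0 astep s0 \<tau> R \<rho> j of (mem, est, s, ups) \<Rightarrow>
        \<not> mult_approx \<epsilon> (f (freq ups)) (the est))"

definition valid_ext_adv :: "nat \<Rightarrow> nat \<Rightarrow> bool list
   \<Rightarrow> ((nat \<Rightarrow> bool) \<Rightarrow> (nat \<Rightarrow> bool) \<Rightarrow> bool list \<Rightarrow> real option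
              \<Rightarrow> (nat \<times> int) \<times> bool list) \<Rightarrow> bool" where
  "valid_ext_adv n k mem0 act \<longleftrightarrow> length mem0 \<le> k \<and>
     (\<forall>\<tau> r mem est. case act \<tau> r mem est of ((i, d), mem') \<Rightarrow>
        i \<in> {1..n} \<and> d \<in> {-1, 1} \<and> length mem' \<le> k)"

definition valid_adv :: "nat \<Rightarrow> nat \<Rightarrow> bool list
   \<Rightarrow> ((nat \<Rightarrow> bool) \<Rightarrow> bool list \<Rightarrow> real option \<Rightarrow> (nat \<times> int) \<times> bool list) \<Rightarrow> bool" where
  "valid_adv n k mem0 act \<longleftrightarrow> length mem0 \<le> k \<and>
     (\<forall>r mem est. case act r mem est of ((i, d), mem') \<Rightarrow>
        i \<in> {1..n} \<and> d \<in> {-1, 1} \<and> length mem' \<le> k)"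

definition ext_fail_prob where
  "ext_fail_prob f \<epsilon> m act mem0 astep s0 =
     measure (coins \<Otimes>\<^sub>M (round_coins \<Otimes>\<^sub>M coins))
       {(\<tau>, R, \<rho>). fails f \<epsilon> m act mem0 astep s0 \<tau> R \<rho>}"

definition fail_prob where
  "fail_prob f \<epsilon> m act mem0 astep s0 =
     measure (round_coins \<Otimes>\<^sub>M coins)
       {(R, \<rho>). fails f \<epsilon> m (\<lambda>\<tau>. act) mem0 astep s0 (\<lambda>_. False) R \<rho>}"

end

theory Submission
  imports Defs
begin

lemma run_fix:
  "run (\<lambda>_. act \<tau>) mem0 astep s0 \<tau>' R \<rho> j = run act mem0 astep s0 \<tau> R \<rho> j"
  by (induction j) (auto split: prod.splits)

lemma fails_fix:
  "fails f \<epsilon> m (\<lambda>_. act \<tau>) mem0 astep s0 \<tau>' R \<rho> = fails f \<epsilon> m act mem0 astep s0 \<tau> R \<rho>"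
  unfolding fails_def by (simp add: run_fix)

lemma prob_coins: "prob_space coins"
  unfolding coins_def by (intro prob_space_PiM) (simp add: prob_space_measure_pmf)

lemma prob_round: "prob_space round_coins"
  unfolding round_coins_def by (intro prob_space_PiM) (simp add: prob_coins)

lemma prob_RC: "prob_space (round_coins \<Otimes>\<^sub>M coins)"
  by (intro prob_space_pair prob_round prob_coins)

theorem lemmaA1:
  fixes n m k :: nat and \<alpha> :: int and \<epsilon> \<delta> :: real
    and f :: "(nat \<Rightarrow> int) \<Rightarrow> real"
    and s0 :: 's and astep :: "(nat \<Rightarrow> bool) \<Rightarrow> 's \<Rightarrow> nat \<times> int \<Rightarrow> 's \<times> real"
    and mem0 :: "bool list"
    and act :: "(nat \<Rightarrow> bool) \<Rightarrow> (nat \<Rightarrow> bool) \<Rightarrow> bool list \<Rightarrow> real option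
                 \<Rightarrow> (nat \<times> int) \<times> bool list"
  assumes "\<alpha> \<ge> 2" and "\<epsilon> > 0"
    and "\<forall>v. (\<forall>i. i \<notin> {1..n} \<longrightarrow> v i = 0) \<longrightarrow> f v = 0 \<or> (1 \<le> f v \<and> f v \<le> of_int \<alpha>)"
    and "valid_ext_adv n k mem0 act"
    and "ext_fail_prob f \<epsilon> m act mem0 astep s0 > \<delta>"
  shows "\<exists>mem0' act'. valid_adv n k mem0' act' \<and> fail_prob f \<epsilon> m act' mem0' astep s0 > \<delta>"
proof (rule ccontr)
  assume neg: "\<not> ?thesis"
  have va: "valid_adv n k mem0 (act \<tau>)" for \<tau>
    using assms(4) unfolding valid_ext_adv_def valid_adv_def by auto
  define A where "A = {(\<tau>, R, \<rho>). fails f \<epsilon> m act mem0 astep s0 \<tau> R \<rho>}"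
  define S where "S \<tau> = {(R, \<rho>). fails f \<epsilon> m act mem0 astep s0 \<tau> R \<rho>}" for \<tau>
  have le: "measure (round_coins \<Otimes>\<^sub>M coins) (S \<tau>) \<le> \<delta>" for \<tau>
  proof -
    have "\<not> (\<delta> < fail_prob f \<epsilon> m (act \<tau>) mem0 astep s0)" using neg va[of \<tau>] by blast
    then show ?thesis unfolding fail_prob_def S_def fails_fix by simp
  qed
  have sec: "Pair \<tau> -` A = S \<tau>" for \<tau> unfolding A_def S_def by auto
  interpret P: prob_space "round_coins \<Otimes>\<^sub>M coins" by (rule prob_RC)
  interpret C: prob_space coins by (rule prob_coins)
  interpret CP: prob_space "coins \<Otimes>\<^sub>M (round_coins \<Otimes>\<^sub>M coins)"
    by (intro prob_space_pair prob_RC prob_coins)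
  have d0: "\<delta> \<ge> 0" using le[of undefined] measure_nonneg[of "round_coins \<Otimes>\<^sub>M coins" "S undefined"] by linarith
  show False
  proof (cases "A \<in> sets (coins \<Otimes>\<^sub>M (round_coins \<Otimes>\<^sub>M coins))")
    case False
    then have "ext_fail_prob f \<epsilon> m act mem0 astep s0 = 0"
      unfolding ext_fail_prob_def A_def[symmetric] by (simp add: measure_notin_sets)
    then show False using assms(5) d0 by simp
  next
    case True
    have "emeasure (coins \<Otimes>\<^sub>M (round_coins \<Otimes>\<^sub>M coins)) A
        = (\<integral>\<^sup>+x. emeasure (round_coins \<Otimes>\<^sub>M coins) (Pair x -` A) \<partial>coins)"
      using True by (rule P.emeasure_pair_measure_alt)
    also have "\<dots> \<le> (\<integral>\<^sup>+x. ennreal \<delta> \<partial>coins)"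
      using le by (intro nn_integral_mono) (simp add: sec P.emeasure_eq_measure ennreal_leI)
    also have "\<dots> = ennreal \<delta>" by (simp add: C.emeasure_space_1)
    finally have "CP.prob A \<le> \<delta>" using d0 by (simp add: CP.emeasure_eq_measure)
    then show False using assms(5) unfolding ext_fail_prob_def A_def by simp
  qed
qed

end
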